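(* Let $\mathbb{K}\in\{\mathbb{R},\mathbb{C}\}$ and let $\mathcal{X}$ be a topological $\mathbb{K}$-vector space whose topological dual $\mathcal{X}^{\ast}$ separates the points of $\mathcal{X}$. Let $F_1,F_2$ be nonempty weak*-closed subsets of $\mathcal{X}^{\ast}$ such that $d_H^{(A)}(F_1,F_2)=0$ for all $A\in\mathcal{X}$. Then $\overline{\mathrm{co}}F_1=\overline{\mathrm{co}}F_2$.
   Context: Topological vector spaces are Hausdorff. $\mathcal{X}^{\ast}$ carries the weak* topology. For nonempty weak*-closed $F,\tilde F\subseteq\mathcal{X}^{\ast}$ and $A\in\mathcal{X}$, $d_H^{(A)}(F,\tilde F)=\max\{\sup_{\sigma\in F}\inf_{\tilde\sigma\in\tilde F}|(\sigma-\tilde\sigma)(A)|,\ \sup_{\tilde\sigma\in\tilde F}\inf_{\sigma\in F}|(\sigma-\tilde\sigma)(A)|\}\in[0,\infty]$. $\overline{\mathrm{co}}F$ denotes the weak*-closure of the convex hull of $F$. *)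

theory Defs
  imports "HOL-Analysis.Analysis"
begin

definition tvs :: "('k::real_normed_field \<Rightarrow> 'a::ab_group_add \<Rightarrow> 'a) \<Rightarrow> 'a topology \<Rightarrow> bool" where
  "tvs smul T \<longleftrightarrow>
     Vector_Spaces.vector_space smul \<and> topspace T = UNIV \<and> Hausdorff_space T \<and>
     continuous_map (prod_topology T T) T (\<lambda>(x, y). x + y) \<and>
     continuous_map (prod_topology euclidean T) T (\<lambda>(c, x). smul c x)"

definition tvs_dual :: "('k::real_normed_field \<Rightarrow> 'a::ab_group_add \<Rightarrow> 'a) \<Rightarrow> 'a topology \<Rightarrow> ('a \<Rightarrow> 'k) set" where
  "tvs_dual smul T = {f. Vector_Spaces.linear smul ((*)) f \<and> continuous_map T euclidean f}"

definition dual_separates_points :: "('k::real_normed_field \<Rightarrow> 'a::ab_group_add \<Rightarrow> 'a) \<Rightarrow> 'a topology \<Rightarrow> bool" where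
  "dual_separates_points smul T \<longleftrightarrow> (\<forall>x y. x \<noteq> y \<longrightarrow> (\<exists>f\<in>tvs_dual smul T. f x \<noteq> f y))"

definition weak_star_topology :: "('k::real_normed_field \<Rightarrow> 'a::ab_group_add \<Rightarrow> 'a) \<Rightarrow> 'a topology \<Rightarrow> ('a \<Rightarrow> 'k) topology" where
  "weak_star_topology smul T = subtopology (product_topology (\<lambda>_. euclidean) UNIV) (tvs_dual smul T)"

definition fun_convex_hull :: "('a \<Rightarrow> 'k::real_normed_field) set \<Rightarrow> ('a \<Rightarrow> 'k) set" where
  "fun_convex_hull F =
     {(\<lambda>x. \<Sum>i\<in>I. of_real (c i) * s i x) | (I :: nat set) c s.
        finite I \<and> (\<forall>i\<in>I. 0 \<le> c i \<and> s i \<in> F) \<and> sum c I = 1}"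

definition closed_convex_hull_ws :: "('k::real_normed_field \<Rightarrow> 'a::ab_group_add \<Rightarrow> 'a) \<Rightarrow> 'a topology \<Rightarrow> ('a \<Rightarrow> 'k) set \<Rightarrow> ('a \<Rightarrow> 'k) set" where
  "closed_convex_hull_ws smul T F = weak_star_topology smul T closure_of fun_convex_hull F"

definition hausdorff_dist_at :: "'a \<Rightarrow> ('a \<Rightarrow> 'k::real_normed_field) set \<Rightarrow> ('a \<Rightarrow> 'k) set \<Rightarrow> ereal" where
  "hausdorff_dist_at A F G =
     max (SUP \<sigma>\<in>F. INF \<tau>\<in>G. ereal (norm ((\<sigma> A) - (\<tau> A))))
         (SUP \<tau>\<in>G. INF \<sigma>\<in>F. ereal (norm ((\<sigma> A) - (\<tau> A))))"

end

theory Submission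
  imports Defs
begin


lemma sq_expand:
  fixes a b :: "nat \<Rightarrow> real"
  shows "(\<Sum>i<N. (a i + t * b i)^2) = (\<Sum>i<N. (a i)^2) + 2*t*(\<Sum>i<N. a i * b i) + t^2*(\<Sum>i<N. (b i)^2)"
  by (simp add: sum.distrib sum_distrib_left power2_eq_square algebra_simps)

lemma Lsep:
  fixes S :: "(nat \<Rightarrow> real) set" and p :: "nat \<Rightarrow> real" and N :: nat
  assumes cvx: "\<And>x y t. x\<in>S \<Longrightarrow> y\<in>S \<Longrightarrow> 0\<le>t \<Longrightarrow> t\<le>1 \<Longrightarrow> (\<lambda>i. (1-t)*x i + t*y i) \<in> S"
    and H: "\<And>c \<eta>. \<eta>>0 \<Longrightarrow> \<exists>y\<in>S. (\<Sum>i<N. c i * (y i - p i)) \<ge> -\<eta>"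
    and eps: "\<epsilon>>0"
  shows "\<exists>x\<in>S. (\<Sum>i<N. (x i - p i)^2) < \<epsilon>"
proof (rule ccontr)
  assume nc: "\<not> ?thesis"
  define D where "D x = (\<Sum>i<N. (x i - p i)^2)" for x :: "nat \<Rightarrow> real"
  have Dge: "\<And>x. x \<in> S \<Longrightarrow> D x \<ge> \<epsilon>" using nc unfolding D_def by force
  have Dnn: "D x \<ge> 0" for x unfolding D_def by (simp add: sum_nonneg)
  obtain y0 where "y0 \<in> S" using H[of 1 "\<lambda>_. 0"] by auto
  hence Sne: "D ` S \<noteq> {}" by auto
  have bdd: "bdd_below (D ` S)" using Dnn by (meson bdd_belowI2)
  define d where "d = Inf (D ` S)"
  have dle: "\<And>x. x \<in> S \<Longrightarrow> d \<le> D x" unfolding d_def using bdd by (simp add: cInf_lower)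
  have dge: "d \<ge> \<epsilon>" unfolding d_def using Sne Dge by (simp add: le_cInf_iff bdd)
  have "\<forall>k. \<exists>x\<in>S. D x < d + 1/(Suc k)"
  proof
    fix k
    have "Inf (D ` S) < d + 1/(Suc k)" unfolding d_def by simp
    then show "\<exists>x\<in>S. D x < d + 1/(Suc k)" using Sne bdd by (simp add: cInf_less_iff)
  qed
  then obtain X where XS: "\<And>k. X k \<in> S" and XD: "\<And>k. D (X k) < d + 1/(Suc k)" by metis
  have para: "(\<Sum>i<N. (x i - y i)^2) \<le> 2 * D x + 2 * D y - 4 * d" if "x\<in>S" "y\<in>S" for x y
  proof -
    define m where "m = (\<lambda>i. (1-1/2)*x i + (1/2)*y i)"
    have "m \<in> S" unfolding m_def by (rule cvx[OF that]) auto
    hence "d \<le> D m" by (rule dle)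
    moreover have "(\<Sum>i<N. (x i - y i)^2) = 2 * D x + 2 * D y - 4 * D m"
      unfolding D_def m_def sum_distrib_left sum_subtractf[symmetric] sum.distrib[symmetric]
      by (rule sum.cong) (auto simp: power2_eq_square algebra_simps)
    ultimately show ?thesis by linarith
  qed
  have coordC: "Cauchy (\<lambda>k. X k i)" if iN: "i < N" for i
  proof (rule metric_CauchyI)
    fix e :: real assume e: "e > 0"
    obtain M :: nat where M: "4 / e^2 < M" using reals_Archimedean2 by blast
    show "\<exists>M. \<forall>m\<ge>M. \<forall>n\<ge>M. dist (X m i) (X n i) < e"
    proof (intro exI allI impI)
      fix m n assume mn: "M \<le> m" "M \<le> n"
      have "(X m i - X n i)^2 \<le> (\<Sum>j<N. (X m j - X n j)^2)"
        using iN by (intro member_le_sum) auto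
      also have "\<dots> \<le> 2 * D (X m) + 2 * D (X n) - 4 * d" by (rule para[OF XS XS])
      also have "\<dots> < 2 * (d + 1/Suc m) + 2 * (d + 1/Suc n) - 4*d" using XD[of m] XD[of n] by (intro diff_strict_right_mono add_strict_mono mult_strict_left_mono) auto
      also have "\<dots> = 2/Suc m + 2/Suc n" by simp
      also have "\<dots> \<le> 2/M + 2/M"
      proof -
        have "(0::real) < 4 / e^2" using e by simp
        hence "real M > 0" using M by linarith
        hence "M > 0" by simp
        hence "2/Suc m \<le> 2/M" "2/Suc n \<le> 2/M" using mn by (auto intro!: divide_left_mono)
        thus ?thesis by linarith
      qed
      also have "\<dots> = 4 / M" by simp
      also have "\<dots> < e^2"
      proof -
        have e2: "e^2 > 0" using e by simp
        have "4 < real M * e^2" using M by (simp add: pos_divide_less_eq[OF e2])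
        moreover have "real M > 0" using M e2
          by (metis divide_pos_pos less_trans zero_less_numeral)
        ultimately show ?thesis by (simp add: pos_divide_less_eq mult.commute)
      qed
      finally have "(X m i - X n i)^2 < e^2" .
      hence "\<bar>X m i - X n i\<bar>^2 < e^2" by simp
      hence "\<bar>X m i - X n i\<bar> < e" by (rule power2_less_imp_less[OF _ less_imp_le[OF e]])
      thus "dist (X m i) (X n i) < e" by (simp add: dist_real_def)
    qed
  qed
  define xs where "xs i = lim (\<lambda>k. X k i)" for i
  have Xlim: "(\<lambda>k. X k i) \<longlonglongrightarrow> xs i" if "i < N" for i
    unfolding xs_def using coordC[OF that] by (simp add: Cauchy_convergent_iff convergent_LIMSEQ_iff)
  have "(\<lambda>k. D (X k)) \<longlonglongrightarrow> D xs"
    unfolding D_def by (intro tendsto_intros Xlim) auto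
  moreover have "(\<lambda>k. D (X k)) \<longlonglongrightarrow> d"
  proof (rule real_tendsto_sandwich[of "\<lambda>_. d" _ _ "\<lambda>k. d + 1/Suc k"])
    show "\<forall>\<^sub>F k in sequentially. d \<le> D (X k)" using dle XS by auto
    show "\<forall>\<^sub>F k in sequentially. D (X k) \<le> d + 1/Suc k" by (intro always_eventually allI less_imp_le XD)
    show "(\<lambda>k. d) \<longlonglongrightarrow> d" by simp
    have "(\<lambda>k. d + 1/real (Suc k)) \<longlonglongrightarrow> d + 0"
      by (intro tendsto_intros) (rule LIMSEQ_inverse_real_of_nat[unfolded inverse_eq_divide])
    thus "(\<lambda>k. d + 1/real (Suc k)) \<longlonglongrightarrow> d" by simp
  qed
  ultimately have Dxs: "D xs = d" using LIMSEQ_unique by blast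
  define w where "w i = p i - xs i" for i
  have dpos: "d > 0" using dge eps by linarith
  obtain y where yS: "y \<in> S" and yw: "(\<Sum>i<N. w i * (y i - p i)) \<ge> -(d/2)"
    using H[of "d/2" w] dpos by auto
  define M where "M = (\<Sum>i<N. (y i - xs i)^2)"
  have Mnn: "M \<ge> 0" unfolding M_def by (simp add: sum_nonneg)
  have key: "d \<le> d - t*d + t^2*M" if t: "0 \<le> t" "t \<le> 1" for t
  proof -
    have "(\<lambda>k. D (\<lambda>i. (1-t)*X k i + t*y i)) \<longlonglongrightarrow> D (\<lambda>i. (1-t)*xs i + t*y i)"
      unfolding D_def by (intro tendsto_intros Xlim) auto
    moreover have "\<forall>\<^sub>F k in sequentially. d \<le> D (\<lambda>i. (1-t)*X k i + t*y i)"
      by (intro always_eventually allI dle cvx[OF XS yS t])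
    ultimately have "d \<le> D (\<lambda>i. (1-t)*xs i + t*y i)"
      by (rule tendsto_lowerbound) simp
    also have "D (\<lambda>i. (1-t)*xs i + t*y i) = (\<Sum>i<N. ((xs i - p i) + t * (y i - xs i))^2)"
      unfolding D_def by (rule sum.cong) (auto simp: algebra_simps)
    also have "\<dots> = D xs + 2*t*(\<Sum>i<N. (xs i - p i) * (y i - xs i)) + t^2*M"
      unfolding sq_expand D_def M_def by simp
    also have "(\<Sum>i<N. (xs i - p i) * (y i - xs i)) = - (\<Sum>i<N. w i * (y i - p i)) - D xs"
      unfolding D_def w_def sum_negf[symmetric] sum_subtractf[symmetric]
      by (rule sum.cong) (auto simp: power2_eq_square algebra_simps)
    finally have "d \<le> d + 2*t*(- (\<Sum>i<N. w i * (y i - p i)) - d) + t^2*M" using Dxs by simp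
    moreover have "2*t*(- (\<Sum>i<N. w i * (y i - p i)) - d) \<le> 2*t*(d/2 - d)"
      using yw t by (intro mult_left_mono) auto
    ultimately show ?thesis by (simp add: algebra_simps)
  qed
  define t where "t = min 1 (d / (2*(M+1)))"
  have t0: "t > 0" unfolding t_def using dpos Mnn by auto
  have t1: "t \<le> 1" unfolding t_def by simp
  have "t*d \<le> t^2*M" using key[OF _ t1] t0 by simp
  hence "d \<le> t*M" using t0 by (simp add: power2_eq_square)
  moreover have "t*M < d"
  proof -
    have "t*M \<le> d / (2*(M+1)) * M" unfolding t_def using Mnn by (intro mult_right_mono) auto
    also have "\<dots> < d" using dpos Mnn
    proof -
      have "M * d + d * 2 > 0" using dpos Mnn by (simp add: add_nonneg_pos)
      thus ?thesis using dpos Mnn by (simp add: field_simps)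
    qed
    finally show ?thesis .
  qed
  ultimately show False by linarith
qed


lemma lin_add: "Vector_Spaces.linear s1 s2 f \<Longrightarrow> f (a + b) = f a + f b"
  unfolding Vector_Spaces.linear_def module_hom_def module_hom_axioms_def by blast
lemma lin_scale: "Vector_Spaces.linear s1 s2 f \<Longrightarrow> f (s1 r a) = s2 r (f a)"
  unfolding Vector_Spaces.linear_def module_hom_def module_hom_axioms_def by blast
lemma lin_sum: "Vector_Spaces.linear s1 s2 f \<Longrightarrow> f (sum g I) = (\<Sum>i\<in>I. f (g i))"
  unfolding Vector_Spaces.linear_def by (metis module_hom.sum)

lemma sum_even_odd:
  fixes g :: "nat \<Rightarrow> 'b::comm_monoid_add"
  assumes "finite I" "finite J"
  shows "(\<Sum>k\<in>(\<lambda>i. 2*i)`I \<union> (\<lambda>j. 2*j+1)`J. g k) = (\<Sum>i\<in>I. g (2*i)) + (\<Sum>j\<in>J. g (2*j+1))"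
proof -
  have ne: "\<And>i j. (2::nat)*i \<noteq> 2*j+1" by presburger
  have d: "(\<lambda>i. 2*i)`I \<inter> (\<lambda>j. 2*j+1)`J = {}" using ne by blast
  have "(\<Sum>k\<in>(\<lambda>i. 2*i)`I \<union> (\<lambda>j. 2*j+1)`J. g k) = (\<Sum>k\<in>(\<lambda>i. 2*i)`I. g k) + (\<Sum>k\<in>(\<lambda>j. 2*j+1)`J. g k)"
    using assms d by (intro sum.union_disjoint) auto
  also have "\<dots> = (\<Sum>i\<in>I. g (2*i)) + (\<Sum>j\<in>J. g (2*j+1))"
    by (subst sum.reindex, simp add: inj_on_def)+ simp
  finally show ?thesis .
qed

lemma conv_convex:
  fixes F :: "('a \<Rightarrow> 'k::real_normed_field) set"
  assumes x: "x \<in> fun_convex_hull F" and y: "y \<in> fun_convex_hull F" and t: "0 \<le> t" "t \<le> 1"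
  shows "(\<lambda>A. of_real (1-t) * x A + of_real t * y A) \<in> fun_convex_hull F"
proof -
  obtain I c s where I: "finite (I::nat set)" "\<forall>i\<in>I. 0 \<le> c i \<and> s i \<in> F" "sum c I = 1"
    and xe: "x = (\<lambda>A. \<Sum>i\<in>I. of_real (c i) * s i A)"
    using x unfolding fun_convex_hull_def by blast
  obtain J c' s' where J: "finite (J::nat set)" "\<forall>i\<in>J. 0 \<le> c' i \<and> s' i \<in> F" "sum c' J = 1"
    and ye: "y = (\<lambda>A. \<Sum>i\<in>J. of_real (c' i) * s' i A)"
    using y unfolding fun_convex_hull_def by blast
  define K where "K = (\<lambda>i. 2*i)`I \<union> (\<lambda>j. 2*j+1)`J"
  define c'' where "c'' k = (if even k then (1-t) * c (k div 2) else t * c' (k div 2))" for k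
  define s'' where "s'' k = (if even k then s (k div 2) else s' (k div 2))" for k
  have "finite K" unfolding K_def using I J by simp
  moreover have "\<forall>k\<in>K. 0 \<le> c'' k \<and> s'' k \<in> F"
    unfolding K_def c''_def s''_def using I J t by auto
  moreover have "sum c'' K = 1"
  proof -
    have "sum c'' K = (\<Sum>i\<in>I. c'' (2*i)) + (\<Sum>j\<in>J. c'' (2*j+1))"
      unfolding K_def by (rule sum_even_odd[OF I(1) J(1)])
    also have "\<dots> = (1-t) * sum c I + t * sum c' J"
      by (simp add: c''_def sum_distrib_left)
    also have "\<dots> = 1" using I(3) J(3) by simp
    finally show ?thesis .
  qed
  moreover have "(\<lambda>A. of_real (1-t) * x A + of_real t * y A) = (\<lambda>A. \<Sum>k\<in>K. of_real (c'' k) * s'' k A)"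
  proof
    fix A
    have "(\<Sum>k\<in>K. of_real (c'' k) * s'' k A) = (\<Sum>i\<in>I. of_real (c'' (2*i)) * s'' (2*i) A) + (\<Sum>j\<in>J. of_real (c'' (2*j+1)) * s'' (2*j+1) A)"
      unfolding K_def by (rule sum_even_odd[OF I(1) J(1)])
    also have "\<dots> = of_real (1-t) * x A + of_real t * y A"
      by (simp add: c''_def s''_def xe ye sum_distrib_left mult.assoc)
    finally show "of_real (1-t) * x A + of_real t * y A = (\<Sum>k\<in>K. of_real (c'' k) * s'' k A)" by simp
  qed
  ultimately show ?thesis unfolding fun_convex_hull_def by blast
qed

lemma sub_conv: "F \<subseteq> fun_convex_hull F"
  unfolding fun_convex_hull_def
  by (auto intro!: exI[of _ "{0::nat}"] exI[of _ "\<lambda>_. 1::real"])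

lemma cmap_cmult:
  fixes f :: "'a \<Rightarrow> 'k::real_normed_algebra"
  assumes "continuous_map X euclidean f"
  shows "continuous_map X euclidean (\<lambda>x. a * f x)"
proof -
  have "continuous_map euclidean euclidean (\<lambda>z::'k. a * z)"
    unfolding continuous_map_iff_continuous2 by (intro continuous_intros)
  from continuous_map_compose[OF assms this] show ?thesis by (simp add: o_def)
qed

lemma conv_dual:
  assumes F: "F \<subseteq> tvs_dual smul T"
  shows "fun_convex_hull F \<subseteq> tvs_dual smul T"
proof
  fix x assume x: "x \<in> fun_convex_hull F"
  obtain I c s where I: "finite (I::nat set)" "\<forall>i\<in>I. 0 \<le> c i \<and> s i \<in> F" "sum c I = 1"
    and xe: "x = (\<lambda>A. \<Sum>i\<in>I. of_real (c i) * s i A)"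
    using x unfolding fun_convex_hull_def by blast
  have "I \<noteq> {}" using I(3) by (metis sum.empty zero_neq_one)
  then obtain i0 where "i0 \<in> I" by auto
  hence "s i0 \<in> tvs_dual smul T" using I(2) F by blast
  hence lin0: "Vector_Spaces.linear smul (*) (s i0)" unfolding tvs_dual_def by blast
  have lin: "Vector_Spaces.linear smul (*) (s i)" and cont: "continuous_map T euclidean (s i)" if "i \<in> I" for i
  proof -
    have "s i \<in> tvs_dual smul T" using I(2) F that by blast
    thus "Vector_Spaces.linear smul (*) (s i)" "continuous_map T euclidean (s i)" unfolding tvs_dual_def by blast+
  qed
  have lin0': "module_hom smul (*) (s i0)" using lin0 module_hom_iff_linear by blast
  have "module_hom smul (*) x"
    unfolding module_hom_def module_hom_axioms_def
  proof (intro conjI allI)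
    show "module smul" using lin0' unfolding module_hom_def by (rule conjunct1)
    show "module ((*) :: 'b \<Rightarrow> _)" using lin0' unfolding module_hom_def by (rule conjunct1[OF conjunct2])
    fix a b
    have "x (a + b) = (\<Sum>i\<in>I. of_real (c i) * s i a + of_real (c i) * s i b)"
      unfolding xe by (intro sum.cong refl) (simp add: lin_add[OF lin] distrib_left)
    also have "\<dots> = x a + x b" unfolding xe by (rule sum.distrib)
    finally show "x (a + b) = x a + x b" .
    fix r
    have "x (smul r b) = (\<Sum>i\<in>I. r * (of_real (c i) * s i b))"
      unfolding xe by (intro sum.cong refl) (simp add: lin_scale[OF lin] mult.left_commute)
    also have "\<dots> = r * x b" unfolding xe by (rule sum_distrib_left[symmetric])
    finally show "x (smul r b) = r * x b" .
  qed
  hence "Vector_Spaces.linear smul (*) x" by (simp only: module_hom_iff_linear)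
  moreover have "continuous_map T euclidean (\<lambda>A. \<Sum>i\<in>I. of_real (c i) * s i A)"
    apply (rule continuous_map_sum[OF I(1)])
    apply (rule cmap_cmult)
    apply (erule cont)
    done
  moreover note xe
  ultimately show "x \<in> tvs_dual smul T" unfolding tvs_dual_def by (simp only: mem_Collect_eq)
qed



lemma approx_conv:
  fixes F1 F2 :: "('a \<Rightarrow> 'k::real_normed_field) set"
  assumes HH: "\<forall>\<tau>\<in>F2. \<forall>A. \<forall>\<eta>>0. \<exists>\<sigma>\<in>F1. norm (\<sigma> A - \<tau> A) < \<eta>"
    and tau: "\<tau> \<in> fun_convex_hull F2" and eta: "\<eta> > 0"
  shows "\<exists>\<sigma>\<in>fun_convex_hull F1. norm (\<sigma> A - \<tau> A) < \<eta>"
proof -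
  obtain I c s where I: "finite (I::nat set)" "\<forall>i\<in>I. 0 \<le> c i \<and> s i \<in> F2" "sum c I = 1"
    and te: "\<tau> = (\<lambda>A. \<Sum>i\<in>I. of_real (c i) * s i A)"
    using tau unfolding fun_convex_hull_def by blast
  have "\<forall>i\<in>I. \<exists>g. g \<in> F1 \<and> norm (g A - s i A) < \<eta>/2"
    using HH I eta by (meson half_gt_zero)
  then obtain g where g: "\<And>i. i \<in> I \<Longrightarrow> g i \<in> F1 \<and> norm (g i A - s i A) < \<eta>/2" by metis
  define \<sigma> where "\<sigma> = (\<lambda>A. \<Sum>i\<in>I. of_real (c i) * g i A)"
  have "\<sigma> \<in> fun_convex_hull F1" unfolding fun_convex_hull_def \<sigma>_def using I g by blast
  moreover have "norm (\<sigma> A - \<tau> A) < \<eta>"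
  proof -
    have "\<sigma> A - \<tau> A = (\<Sum>i\<in>I. of_real (c i) * (g i A - s i A))"
      unfolding \<sigma>_def te by (simp add: sum_subtractf[symmetric] algebra_simps)
    hence "norm (\<sigma> A - \<tau> A) \<le> (\<Sum>i\<in>I. norm (of_real (c i) * (g i A - s i A)))"
      by (simp add: norm_sum)
    also have "\<dots> = (\<Sum>i\<in>I. c i * norm (g i A - s i A))"
      using I by (intro sum.cong) (auto simp: norm_mult)
    also have "\<dots> \<le> (\<Sum>i\<in>I. c i * (\<eta>/2))"
      using I g by (intro sum_mono mult_left_mono) (auto intro: less_imp_le)
    also have "\<dots> = (\<Sum>i\<in>I. c i) * (\<eta>/2)" by (rule sum_distrib_right[symmetric])
    also have "\<dots> = \<eta>/2" using I(3) by simp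
    finally show ?thesis using eta by linarith
  qed
  ultimately show ?thesis by blast
qed

lemma topo_closure:
  fixes P :: "('a::ab_group_add \<Rightarrow> 'k::real_normed_field) set"
  assumes P: "P \<subseteq> tvs_dual smul T" and tau: "\<tau> \<in> tvs_dual smul T"
    and FA: "\<And>J \<epsilon>. finite J \<Longrightarrow> \<epsilon> > 0 \<Longrightarrow> \<exists>\<sigma>\<in>P. \<forall>A\<in>J. norm (\<sigma> A - \<tau> A) < \<epsilon>"
  shows "\<tau> \<in> weak_star_topology smul T closure_of P"
  unfolding in_closure_of
proof (intro conjI allI impI)
  show "\<tau> \<in> topspace (weak_star_topology smul T)"
    using tau unfolding weak_star_topology_def by simp
  fix W assume W: "\<tau> \<in> W \<and> openin (weak_star_topology smul T) W"
  then obtain U where U: "openin (product_topology (\<lambda>_. euclidean) UNIV) U" "W = U \<inter> tvs_dual smul T"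
    unfolding weak_star_topology_def openin_subtopology by blast
  hence "\<tau> \<in> U" using W by blast
  have "\<exists>V. finite {i \<in> UNIV. V i \<noteq> topspace euclidean} \<and> (\<forall>i\<in>UNIV. openin euclidean (V i)) \<and>
      \<tau> \<in> Pi\<^sub>E UNIV V \<and> Pi\<^sub>E UNIV V \<subseteq> U"
    using U(1) \<open>\<tau> \<in> U\<close> unfolding openin_product_topology_alt by blast
  then obtain V :: "'a \<Rightarrow> 'k set" where V: "finite {i. V i \<noteq> UNIV}" "\<And>i. open (V i)" "\<tau> \<in> Pi\<^sub>E UNIV V" "Pi\<^sub>E UNIV V \<subseteq> U"
    by (simp only: topspace_euclidean open_openin UNIV_I simp_thms ball_UNIV mem_Collect_eq) blast
  define J where "J = {i. V i \<noteq> UNIV}"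
  have "\<exists>r>0. ball (\<tau> A) r \<subseteq> V A" for A
  proof -
    have "\<tau> A \<in> V A" using V(3) by (simp add: PiE_iff)
    thus ?thesis using V(2)[of A] open_contains_ball by blast
  qed
  hence "\<forall>A\<in>J. \<exists>r>0. ball (\<tau> A) r \<subseteq> V A" by blast
  then obtain r where r: "\<And>A. A \<in> J \<Longrightarrow> r A > 0 \<and> ball (\<tau> A) (r A) \<subseteq> V A" by metis
  define \<epsilon> where "\<epsilon> = Min (insert 1 (r ` J))"
  have fin: "finite (insert 1 (r ` J))" using V(1) J_def by simp
  have epos: "\<epsilon> > 0" unfolding \<epsilon>_def using fin r by (subst Min_gr_iff) auto
  have ele: "\<epsilon> \<le> r A" if "A \<in> J" for A unfolding \<epsilon>_def using fin that by (intro Min_le) auto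
  obtain \<sigma> where s: "\<sigma> \<in> P" "\<forall>A\<in>J. norm (\<sigma> A - \<tau> A) < \<epsilon>"
    using FA[OF _ epos] V(1) J_def by blast
  have "\<sigma> A \<in> V A" for A
  proof (cases "A \<in> J")
    case True
    have "norm (\<sigma> A - \<tau> A) < \<epsilon>" using s True by blast
    hence "dist (\<tau> A) (\<sigma> A) < r A" using ele[OF True] by (simp add: dist_norm norm_minus_commute)
    thus ?thesis using r[OF True] by auto
  next
    case False thus ?thesis unfolding J_def by auto
  qed
  hence "\<sigma> \<in> U" using V(4) by auto
  thus "\<exists>y. y \<in> P \<and> y \<in> W" using s P U(2) by blast
qed



lemma dual_lin: "\<sigma> \<in> tvs_dual s T \<Longrightarrow> Vector_Spaces.linear s (*) \<sigma>"
  unfolding tvs_dual_def by simp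

lemma sum_two:
  fixes g :: "nat \<Rightarrow> 'b::comm_monoid_add"
  shows "(\<Sum>k<2*n. g k) = (\<Sum>i<n. g (2*i) + g (2*i+1))"
  by (induction n) (auto simp: add.assoc)

lemma fa_real:
  fixes P :: "('a::ab_group_add \<Rightarrow> real) set" and sR :: "real \<Rightarrow> 'a \<Rightarrow> 'a"
  assumes P: "P \<subseteq> tvs_dual sR TR" and tau: "\<tau> \<in> tvs_dual sR TR"
    and cv: "\<And>x y t. x\<in>P \<Longrightarrow> y\<in>P \<Longrightarrow> 0\<le>t \<Longrightarrow> t\<le>1 \<Longrightarrow> (\<lambda>A. of_real (1-t) * x A + of_real t * y A) \<in> P"
    and HT: "\<And>A \<eta>. \<eta>>0 \<Longrightarrow> \<exists>\<sigma>\<in>P. norm (\<sigma> A - \<tau> A) < \<eta>"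
    and J: "finite J" and e: "\<epsilon>>0"
  shows "\<exists>\<sigma>\<in>P. \<forall>A\<in>J. norm (\<sigma> A - \<tau> A) < \<epsilon>"
proof -
  obtain n and f :: "nat \<Rightarrow> 'a" where Jf: "J = f ` {i. i<n}"
    using finite_imp_nat_seg_image_inj_on[OF J] by blast
  define S where "S = (\<lambda>\<sigma>. \<lambda>i. \<sigma> (f i)) ` P"
  define p where "p = (\<lambda>i. \<tau> (f i))"
  have "\<exists>x\<in>S. (\<Sum>i<n. (x i - p i)^2) < \<epsilon>^2"
  proof (rule Lsep)
    fix x y and t :: real assume "x \<in> S" "y \<in> S" and t: "0 \<le> t" "t \<le> 1"
    then obtain s1 s2 where s: "s1 \<in> P" "s2 \<in> P" "x = (\<lambda>i. s1 (f i))" "y = (\<lambda>i. s2 (f i))"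
      unfolding S_def by blast
    show "(\<lambda>i. (1-t)*x i + t*y i) \<in> S" unfolding S_def
    proof (rule image_eqI)
      show "(\<lambda>i. (1-t)*x i + t*y i) = (\<lambda>\<sigma>. \<lambda>i. \<sigma> (f i)) (\<lambda>A. of_real (1-t) * s1 A + of_real t * s2 A)"
        using s by simp
      show "(\<lambda>A. of_real (1-t) * s1 A + of_real t * s2 A) \<in> P" by (rule cv[OF s(1,2) t])
    qed
  next
    fix c :: "nat \<Rightarrow> real" and \<eta> :: real assume eta: "\<eta> > 0"
    define B where "B = (\<Sum>i<n. sR (c i) (f i))"
    obtain \<sigma> where s: "\<sigma> \<in> P" "norm (\<sigma> B - \<tau> B) < \<eta>" using HT[OF eta] by blast
    have ls: "Vector_Spaces.linear sR (*) \<sigma>" using s P dual_lin by blast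
    have lt: "Vector_Spaces.linear sR (*) \<tau>" using tau dual_lin by blast
    have "\<sigma> B - \<tau> B = (\<Sum>i<n. c i * (\<sigma> (f i) - p i))"
      unfolding B_def lin_sum[OF ls] lin_sum[OF lt] lin_scale[OF ls] lin_scale[OF lt] p_def
      by (simp add: sum_subtractf[symmetric] algebra_simps)
    hence "(\<Sum>i<n. c i * ((\<lambda>i. \<sigma> (f i)) i - p i)) \<ge> -\<eta>" using s by auto
    moreover have "(\<lambda>i. \<sigma> (f i)) \<in> S" unfolding S_def using s by blast
    ultimately show "\<exists>y\<in>S. (\<Sum>i<n. c i * (y i - p i)) \<ge> -\<eta>" by (intro bexI[where x="\<lambda>i. \<sigma> (f i)"]) auto
  next
    show "\<epsilon>^2 > 0" using e by simp
  qed
  then obtain \<sigma> where s: "\<sigma> \<in> P" "(\<Sum>i<n. (\<sigma> (f i) - p i)^2) < \<epsilon>^2" unfolding S_def by blast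
  have "norm (\<sigma> A - \<tau> A) < \<epsilon>" if AJ: "A \<in> J" for A
  proof -
    obtain i where i: "i < n" "A = f i" using AJ Jf by blast
    have "\<bar>\<sigma> A - \<tau> A\<bar>^2 \<le> (\<Sum>i<n. (\<sigma> (f i) - p i)^2)"
      using i unfolding p_def by (auto intro: member_le_sum)
    hence "\<bar>\<sigma> A - \<tau> A\<bar>^2 < \<epsilon>^2" using s by linarith
    hence "\<bar>\<sigma> A - \<tau> A\<bar> < \<epsilon>" by (rule power2_less_imp_less[OF _ less_imp_le[OF e]])
    thus ?thesis by simp
  qed
  thus ?thesis using s by blast
qed

lemma fa_complex:
  fixes P :: "('a::ab_group_add \<Rightarrow> complex) set" and sC :: "complex \<Rightarrow> 'a \<Rightarrow> 'a"
  assumes P: "P \<subseteq> tvs_dual sC TC" and tau: "\<tau> \<in> tvs_dual sC TC"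
    and cv: "\<And>x y t. x\<in>P \<Longrightarrow> y\<in>P \<Longrightarrow> 0\<le>t \<Longrightarrow> t\<le>1 \<Longrightarrow> (\<lambda>A. of_real (1-t) * x A + of_real t * y A) \<in> P"
    and HT: "\<And>A \<eta>. \<eta>>0 \<Longrightarrow> \<exists>\<sigma>\<in>P. norm (\<sigma> A - \<tau> A) < \<eta>"
    and J: "finite J" and e: "\<epsilon>>0"
  shows "\<exists>\<sigma>\<in>P. \<forall>A\<in>J. norm (\<sigma> A - \<tau> A) < \<epsilon>"
proof -
  obtain n and f :: "nat \<Rightarrow> 'a" where Jf: "J = f ` {i. i<n}"
    using finite_imp_nat_seg_image_inj_on[OF J] by blast
  define \<Phi> where "\<Phi> = (\<lambda>\<sigma>::'a \<Rightarrow> complex. \<lambda>k. if even k then Re (\<sigma> (f (k div 2))) else Im (\<sigma> (f (k div 2))))"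
  define S where "S = \<Phi> ` P"
  define p where "p = \<Phi> \<tau>"
  have "\<exists>x\<in>S. (\<Sum>k<2*n. (x k - p k)^2) < \<epsilon>^2"
  proof (rule Lsep)
    fix x y and t :: real assume "x \<in> S" "y \<in> S" and t: "0 \<le> t" "t \<le> 1"
    then obtain s1 s2 where s: "s1 \<in> P" "s2 \<in> P" "x = \<Phi> s1" "y = \<Phi> s2"
      unfolding S_def by blast
    show "(\<lambda>i. (1-t)*x i + t*y i) \<in> S" unfolding S_def
    proof (rule image_eqI)
      show "(\<lambda>i. (1-t)*x i + t*y i) = \<Phi> (\<lambda>A. of_real (1-t) * s1 A + of_real t * s2 A)"
        using s unfolding \<Phi>_def by (auto simp: fun_eq_iff)
      show "(\<lambda>A. of_real (1-t) * s1 A + of_real t * s2 A) \<in> P" by (rule cv[OF s(1,2) t])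
    qed
  next
    fix c :: "nat \<Rightarrow> real" and \<eta> :: real assume eta: "\<eta> > 0"
    define B where "B = (\<Sum>i<n. sC (complex_of_real (c (2*i)) - \<i> * complex_of_real (c (2*i+1))) (f i))"
    obtain \<sigma> where s: "\<sigma> \<in> P" "norm (\<sigma> B - \<tau> B) < \<eta>" using HT[OF eta] by blast
    have ls: "Vector_Spaces.linear sC (*) \<sigma>" using s P dual_lin by blast
    have lt: "Vector_Spaces.linear sC (*) \<tau>" using tau dual_lin by blast
    have "\<sigma> B - \<tau> B = (\<Sum>i<n. (complex_of_real (c (2*i)) - \<i> * complex_of_real (c (2*i+1))) * (\<sigma> (f i) - \<tau> (f i)))"
      unfolding B_def lin_sum[OF ls] lin_sum[OF lt] lin_scale[OF ls] lin_scale[OF lt]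
      by (simp add: sum_subtractf[symmetric] algebra_simps)
    hence "Re (\<sigma> B - \<tau> B) = (\<Sum>i<n. c (2*i) * (\<Phi> \<sigma> (2*i) - p (2*i)) + c (2*i+1) * (\<Phi> \<sigma> (2*i+1) - p (2*i+1)))"
      unfolding p_def \<Phi>_def by (simp add: algebra_simps)
    also have "\<dots> = (\<Sum>k<2*n. c k * (\<Phi> \<sigma> k - p k))" by (rule sum_two[symmetric])
    finally have "(\<Sum>k<2*n. c k * (\<Phi> \<sigma> k - p k)) \<ge> -\<eta>"
      using s(2) abs_Re_le_cmod[of "\<sigma> B - \<tau> B"] by linarith
    moreover have "\<Phi> \<sigma> \<in> S" unfolding S_def using s by blast
    ultimately show "\<exists>y\<in>S. (\<Sum>k<2*n. c k * (y k - p k)) \<ge> -\<eta>" by blast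
  next
    show "\<epsilon>^2 > 0" using e by simp
  qed
  then obtain \<sigma> where s: "\<sigma> \<in> P" "(\<Sum>k<2*n. (\<Phi> \<sigma> k - p k)^2) < \<epsilon>^2" unfolding S_def by blast
  have "norm (\<sigma> A - \<tau> A) < \<epsilon>" if AJ: "A \<in> J" for A
  proof -
    obtain i where i: "i < n" "A = f i" using AJ Jf by blast
    have "norm (\<sigma> A - \<tau> A)^2 = (\<Phi> \<sigma> (2*i) - p (2*i))^2 + (\<Phi> \<sigma> (2*i+1) - p (2*i+1))^2"
      unfolding p_def \<Phi>_def i(2) by (simp add: cmod_power2)
    also have "\<dots> \<le> (\<Sum>i<n. (\<Phi> \<sigma> (2*i) - p (2*i))^2 + (\<Phi> \<sigma> (2*i+1) - p (2*i+1))^2)"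
      using i by (intro member_le_sum) auto
    also have "\<dots> = (\<Sum>k<2*n. (\<Phi> \<sigma> k - p k)^2)" by (rule sum_two[symmetric])
    finally have "norm (\<sigma> A - \<tau> A)^2 < \<epsilon>^2" using s by linarith
    thus ?thesis by (rule power2_less_imp_less[OF _ less_imp_le[OF e]])
  qed
  thus ?thesis using s by blast
qed

lemma assemble:
  fixes F1 F2 :: "('a::ab_group_add \<Rightarrow> 'k::real_normed_field) set" and smul :: "'k \<Rightarrow> 'a \<Rightarrow> 'a"
  assumes FA: "\<And>P \<tau> J \<epsilon>. P \<subseteq> tvs_dual smul T \<Longrightarrow> \<tau> \<in> tvs_dual smul T \<Longrightarrow>
      (\<And>x y t. x\<in>P \<Longrightarrow> y\<in>P \<Longrightarrow> 0\<le>t \<Longrightarrow> t\<le>1 \<Longrightarrow> (\<lambda>A. of_real (1-t) * x A + of_real t * y A) \<in> P) \<Longrightarrow>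
      (\<And>A \<eta>. \<eta>>0 \<Longrightarrow> \<exists>\<sigma>\<in>P. norm (\<sigma> A - \<tau> A) < \<eta>) \<Longrightarrow> finite J \<Longrightarrow> \<epsilon>>0 \<Longrightarrow>
      \<exists>\<sigma>\<in>P. \<forall>A\<in>J. norm (\<sigma> A - \<tau> A) < \<epsilon>"
    and F1: "F1 \<subseteq> tvs_dual smul T" and F2: "F2 \<subseteq> tvs_dual smul T"
    and HH: "\<And>\<tau> A \<eta>. \<tau> \<in> F2 \<Longrightarrow> \<eta> > 0 \<Longrightarrow> \<exists>\<sigma>\<in>F1. norm (\<sigma> A - \<tau> A) < \<eta>"
  shows "closed_convex_hull_ws smul T F2 \<subseteq> closed_convex_hull_ws smul T F1"
  unfolding closed_convex_hull_ws_def
proof (rule closure_of_minimal[OF _ closedin_closure_of], rule subsetI)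
  fix \<tau> assume t: "\<tau> \<in> fun_convex_hull F2"
  have td: "\<tau> \<in> tvs_dual smul T" using conv_dual[OF F2] t by blast
  show "\<tau> \<in> weak_star_topology smul T closure_of fun_convex_hull F1"
  proof (rule topo_closure[OF conv_dual[OF F1] td])
    fix J :: "'a set" and \<epsilon> :: real assume "finite J" "\<epsilon> > 0"
    show "\<exists>\<sigma>\<in>fun_convex_hull F1. \<forall>A\<in>J. norm (\<sigma> A - \<tau> A) < \<epsilon>"
    proof (rule FA[OF conv_dual[OF F1] td])
      show "\<And>x y t. x \<in> fun_convex_hull F1 \<Longrightarrow> y \<in> fun_convex_hull F1 \<Longrightarrow> 0 \<le> t \<Longrightarrow> t \<le> 1 \<Longrightarrow>
         (\<lambda>A. of_real (1 - t) * x A + of_real t * y A) \<in> fun_convex_hull F1"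
        by (rule conv_convex)
      show "\<And>A \<eta>. \<eta>>0 \<Longrightarrow> \<exists>\<sigma>\<in>fun_convex_hull F1. norm (\<sigma> A - \<tau> A) < \<eta>"
      proof -
        have HH': "\<forall>\<tau>\<in>F2. \<forall>A. \<forall>\<eta>>0. \<exists>\<sigma>\<in>F1. norm (\<sigma> A - \<tau> A) < \<eta>" using HH by blast
        show "\<And>A \<eta>. \<eta>>0 \<Longrightarrow> \<exists>\<sigma>\<in>fun_convex_hull F1. norm (\<sigma> A - \<tau> A) < \<eta>"
          using approx_conv[OF HH' t] by blast
      qed
    qed fact+
  qed
qed

lemma hd_zero1:
  assumes "hausdorff_dist_at A F G = 0" "\<sigma> \<in> F" "\<eta> > 0"
  shows "\<exists>\<tau>\<in>G. norm (\<sigma> A - \<tau> A) < \<eta>"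
proof -
  have "(SUP \<sigma>\<in>F. INF \<tau>\<in>G. ereal (norm ((\<sigma> A) - (\<tau> A)))) \<le> 0"
    using assms(1) unfolding hausdorff_dist_at_def by (metis max.cobounded1)
  hence "(INF \<tau>\<in>G. ereal (norm ((\<sigma> A) - (\<tau> A)))) \<le> 0" using assms(2) by (simp add: SUP_le_iff)
  also have "(0::ereal) < ereal \<eta>" using assms(3) by simp
  finally obtain \<tau> where "\<tau> \<in> G" "ereal (norm (\<sigma> A - \<tau> A)) < ereal \<eta>" by (auto simp: INF_less_iff)
  thus ?thesis by auto
qed

lemma hd_zero2:
  assumes "hausdorff_dist_at A F G = 0" "\<tau> \<in> G" "\<eta> > 0"
  shows "\<exists>\<sigma>\<in>F. norm (\<sigma> A - \<tau> A) < \<eta>"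
proof -
  have "(SUP \<tau>\<in>G. INF \<sigma>\<in>F. ereal (norm ((\<sigma> A) - (\<tau> A)))) \<le> 0"
    using assms(1) unfolding hausdorff_dist_at_def by (metis max.cobounded2)
  hence "(INF \<sigma>\<in>F. ereal (norm ((\<sigma> A) - (\<tau> A)))) \<le> 0" using assms(2) by (simp add: SUP_le_iff)
  also have "(0::ereal) < ereal \<eta>" using assms(3) by simp
  finally obtain \<sigma> where "\<sigma> \<in> F" "ereal (norm (\<sigma> A - \<tau> A)) < ereal \<eta>" by (auto simp: INF_less_iff)
  thus ?thesis by auto
qed

lemma hd_zero1':
  assumes "hausdorff_dist_at A F G = 0" "\<sigma> \<in> F" "\<eta> > 0"
  shows "\<exists>\<tau>\<in>G. norm (\<tau> A - \<sigma> A) < \<eta>"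
  using hd_zero1[OF assms] by (simp add: norm_minus_commute)

lemma ws_sub: "closedin (weak_star_topology s T) F \<Longrightarrow> F \<subseteq> tvs_dual s T"
  using closedin_subset unfolding weak_star_topology_def by fastforce

theorem proposition3p10:
  fixes sR :: "real \<Rightarrow> 'a::ab_group_add \<Rightarrow> 'a" and TR :: "'a topology"
    and F1 F2 :: "('a \<Rightarrow> real) set"
    and sC :: "complex \<Rightarrow> 'b::ab_group_add \<Rightarrow> 'b" and TC :: "'b topology"
    and G1 G2 :: "('b \<Rightarrow> complex) set"
  shows "(tvs sR TR \<and> dual_separates_points sR TR \<and>
          F1 \<noteq> {} \<and> F2 \<noteq> {} \<and>
          closedin (weak_star_topology sR TR) F1 \<and> closedin (weak_star_topology sR TR) F2 \<and>
          (\<forall>A. hausdorff_dist_at A F1 F2 = 0)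
          \<longrightarrow> closed_convex_hull_ws sR TR F1 = closed_convex_hull_ws sR TR F2)
       \<and> (tvs sC TC \<and> dual_separates_points sC TC \<and>
          G1 \<noteq> {} \<and> G2 \<noteq> {} \<and>
          closedin (weak_star_topology sC TC) G1 \<and> closedin (weak_star_topology sC TC) G2 \<and>
          (\<forall>A. hausdorff_dist_at A G1 G2 = 0)
          \<longrightarrow> closed_convex_hull_ws sC TC G1 = closed_convex_hull_ws sC TC G2)"
proof (intro conjI impI)
  assume a: "tvs sR TR \<and> dual_separates_points sR TR \<and>
          F1 \<noteq> {} \<and> F2 \<noteq> {} \<and>
          closedin (weak_star_topology sR TR) F1 \<and> closedin (weak_star_topology sR TR) F2 \<and>
          (\<forall>A. hausdorff_dist_at A F1 F2 = 0)"
  have s1: "F1 \<subseteq> tvs_dual sR TR" and s2: "F2 \<subseteq> tvs_dual sR TR" using a ws_sub by blast+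
  have h: "\<And>A. hausdorff_dist_at A F1 F2 = 0" using a by blast
  show "closed_convex_hull_ws sR TR F1 = closed_convex_hull_ws sR TR F2"
  proof
    show "closed_convex_hull_ws sR TR F2 \<subseteq> closed_convex_hull_ws sR TR F1"
      apply (rule assemble)
      apply (rule fa_real; assumption)
      apply (rule s1)
      apply (rule s2)
      apply (rule hd_zero2[OF h]; assumption)
      done
    show "closed_convex_hull_ws sR TR F1 \<subseteq> closed_convex_hull_ws sR TR F2"
      apply (rule assemble)
      apply (rule fa_real; assumption)
      apply (rule s2)
      apply (rule s1)
      apply (rule hd_zero1'[OF h]; assumption)
      done
  qed
next
  assume a: "tvs sC TC \<and> dual_separates_points sC TC \<and>
          G1 \<noteq> {} \<and> G2 \<noteq> {} \<and>
          closedin (weak_star_topology sC TC) G1 \<and> closedin (weak_star_topology sC TC) G2 \<and>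
          (\<forall>A. hausdorff_dist_at A G1 G2 = 0)"
  have s1: "G1 \<subseteq> tvs_dual sC TC" and s2: "G2 \<subseteq> tvs_dual sC TC" using a ws_sub by blast+
  have h: "\<And>A. hausdorff_dist_at A G1 G2 = 0" using a by blast
  show "closed_convex_hull_ws sC TC G1 = closed_convex_hull_ws sC TC G2"
  proof
    show "closed_convex_hull_ws sC TC G2 \<subseteq> closed_convex_hull_ws sC TC G1"
      apply (rule assemble)
      apply (rule fa_complex; assumption)
      apply (rule s1)
      apply (rule s2)
      apply (rule hd_zero2[OF h]; assumption)
      done
    show "closed_convex_hull_ws sC TC G1 \<subseteq> closed_convex_hull_ws sC TC G2"
      apply (rule assemble)
      apply (rule fa_complex; assumption)
      apply (rule s2)
      apply (rule s1)
      apply (rule hd_zero1'[OF h]; assumption)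
      done
  qed
qed

end
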